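(* Let $R$ be a local $*$-ring. Then the following are equivalent: (1) $R$ is strongly $J$-$*$-clean. (2) $R$ is strongly $J$-clean. (3) $R$ is uniquely clean. (4) $R/J(R)\cong\mathbb{Z}_2$. (5) $1$ is not the sum of two units in $R$.
   Context: All rings are associative with identity. A $*$-ring is a ring $R$ with an involution $*$, i.e. a map $a\mapsto a^*$ with $(a+b)^*=a^*+b^*$, $(ab)^*=b^*a^*$, $(a^* )^*=a$. A ring is local if it has a unique maximal right ideal. $J(R)$ denotes the Jacobson radical of $R$. A projection is an element $e$ with $e^2=e=e^*$. $R$ is strongly $J$-$*$-clean if every $a\in R$ can be written $a=e+u$ with $e$ a projection, $u\in J(R)$ and $ae=ea$. $R$ is strongly $J$-clean if every $a\in R$ can be written $a=e+u$ with $e$ an idempotent, $u\in J(R)$ and $ae=ea$. $R$ is uniquely clean if every element of $R$ can be written uniquely as the sum of an idempotent and a unit. *)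

theory Defs
  imports "HOL-Algebra.Algebra"
begin

definition star_ring :: "('a, 'b) ring_scheme \<Rightarrow> ('a \<Rightarrow> 'a) \<Rightarrow> bool" where
  "star_ring R s \<longleftrightarrow> ring R \<and>
     (\<forall>a\<in>carrier R. s a \<in> carrier R) \<and>
     (\<forall>a\<in>carrier R. \<forall>b\<in>carrier R. s (a \<oplus>\<^bsub>R\<^esub> b) = s a \<oplus>\<^bsub>R\<^esub> s b) \<and>
     (\<forall>a\<in>carrier R. \<forall>b\<in>carrier R. s (a \<otimes>\<^bsub>R\<^esub> b) = s b \<otimes>\<^bsub>R\<^esub> s a) \<and>
     (\<forall>a\<in>carrier R. s (s a) = a)"

definition right_ideal :: "'a set \<Rightarrow> ('a, 'b) ring_scheme \<Rightarrow> bool" where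
  "right_ideal I R \<longleftrightarrow> additive_subgroup I R \<and>
     (\<forall>x\<in>I. \<forall>r\<in>carrier R. x \<otimes>\<^bsub>R\<^esub> r \<in> I)"

definition maximal_right_ideal :: "'a set \<Rightarrow> ('a, 'b) ring_scheme \<Rightarrow> bool" where
  "maximal_right_ideal M R \<longleftrightarrow> right_ideal M R \<and> M \<noteq> carrier R \<and>
     (\<forall>I. right_ideal I R \<longrightarrow> M \<subseteq> I \<longrightarrow> I = M \<or> I = carrier R)"

definition local_ring :: "('a, 'b) ring_scheme \<Rightarrow> bool" where
  "local_ring R \<longleftrightarrow> ring R \<and> (\<exists>!M. maximal_right_ideal M R)"

definition jacobson :: "('a, 'b) ring_scheme \<Rightarrow> 'a set" where
  "jacobson R = carrier R \<inter> \<Inter> {M. maximal_right_ideal M R}"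

definition is_projection :: "('a, 'b) ring_scheme \<Rightarrow> ('a \<Rightarrow> 'a) \<Rightarrow> 'a \<Rightarrow> bool" where
  "is_projection R s e \<longleftrightarrow> e \<in> carrier R \<and> e \<otimes>\<^bsub>R\<^esub> e = e \<and> s e = e"

definition is_idem :: "('a, 'b) ring_scheme \<Rightarrow> 'a \<Rightarrow> bool" where
  "is_idem R e \<longleftrightarrow> e \<in> carrier R \<and> e \<otimes>\<^bsub>R\<^esub> e = e"

definition strongly_J_star_clean :: "('a, 'b) ring_scheme \<Rightarrow> ('a \<Rightarrow> 'a) \<Rightarrow> bool" where
  "strongly_J_star_clean R s \<longleftrightarrow> (\<forall>a\<in>carrier R. \<exists>e u. is_projection R s e \<and>
      u \<in> jacobson R \<and> a = e \<oplus>\<^bsub>R\<^esub> u \<and> a \<otimes>\<^bsub>R\<^esub> e = e \<otimes>\<^bsub>R\<^esub> a)"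

definition strongly_J_clean :: "('a, 'b) ring_scheme \<Rightarrow> bool" where
  "strongly_J_clean R \<longleftrightarrow> (\<forall>a\<in>carrier R. \<exists>e u. is_idem R e \<and>
      u \<in> jacobson R \<and> a = e \<oplus>\<^bsub>R\<^esub> u \<and> a \<otimes>\<^bsub>R\<^esub> e = e \<otimes>\<^bsub>R\<^esub> a)"

definition uniquely_clean :: "('a, 'b) ring_scheme \<Rightarrow> bool" where
  "uniquely_clean R \<longleftrightarrow> (\<forall>a\<in>carrier R. \<exists>!p. is_idem R (fst p) \<and>
      snd p \<in> Units R \<and> a = fst p \<oplus>\<^bsub>R\<^esub> snd p)"

end

theory Submission
  imports Defs
begin

context ring begin

lemma addsubI:
  assumes "H \<subseteq> carrier R" "\<zero> \<in> H" "\<And>x y. x \<in> H \<Longrightarrow> y \<in> H \<Longrightarrow> x \<oplus> y \<in> H"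
    "\<And>x. x \<in> H \<Longrightarrow> \<ominus> x \<in> H"
  shows "additive_subgroup H R"
  unfolding additive_subgroup_def
proof (rule subgroup.intro)
  show "H \<subseteq> carrier (add_monoid R)" using assms(1) by simp
  show "\<one>\<^bsub>add_monoid R\<^esub> \<in> H" using assms(2) by simp
  show "x \<otimes>\<^bsub>add_monoid R\<^esub> y \<in> H" if "x \<in> H" "y \<in> H" for x y using assms(3) that by simp
  show "inv\<^bsub>add_monoid R\<^esub> x \<in> H" if "x \<in> H" for x using assms(4) that by (simp add: a_inv_def)
qed

lemma right_ideal_one:
  assumes "right_ideal I R" "\<one> \<in> I" shows "I = carrier R"
proof -
  interpret additive_subgroup I R using assms unfolding right_ideal_def by auto
  show ?thesis
  proof
    show "I \<subseteq> carrier R" by (rule a_subset)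
    show "carrier R \<subseteq> I"
    proof
      fix x assume "x \<in> carrier R"
      then have "\<one> \<otimes> x \<in> I" using assms unfolding right_ideal_def by blast
      then show "x \<in> I" using \<open>x \<in> carrier R\<close> by simp
    qed
  qed
qed

lemma exists_max:
  assumes "right_ideal I R" "\<one> \<notin> I"
  shows "\<exists>M. maximal_right_ideal M R \<and> I \<subseteq> M"
proof -
  define A where "A = {J. right_ideal J R \<and> \<one> \<notin> J \<and> I \<subseteq> J}"
  have "\<exists>M\<in>A. \<forall>Z\<in>A. M \<subseteq> Z \<longrightarrow> Z = M"
  proof (rule subset_Zorn_nonempty)
    show "A \<noteq> {}" using assms A_def by auto
  next
    fix C assume C: "C \<noteq> {}" "subset.chain A C"
    then have sub: "C \<subseteq> A" and ch: "\<And>Z W. Z \<in> C \<Longrightarrow> W \<in> C \<Longrightarrow> Z \<subseteq> W \<or> W \<subseteq> Z"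
      unfolding subset.chain_def by auto
    have ri: "\<And>Z. Z \<in> C \<Longrightarrow> right_ideal Z R" using sub A_def by auto
    have as: "\<And>Z. Z \<in> C \<Longrightarrow> additive_subgroup Z R" using ri unfolding right_ideal_def by auto
    have "right_ideal (\<Union>C) R"
      unfolding right_ideal_def
    proof (intro conjI ballI)
      show "additive_subgroup (\<Union>C) R"
      proof (rule addsubI)
        show "\<Union>C \<subseteq> carrier R" using as[THEN additive_subgroup.a_subset] by (simp add: Union_least)
        show "\<zero> \<in> \<Union>C" using C(1) as[THEN additive_subgroup.zero_closed] by auto
        show "\<ominus> x \<in> \<Union>C" if "x \<in> \<Union>C" for x using that as[THEN additive_subgroup.a_inv_closed] by auto
        show "x \<oplus> y \<in> \<Union>C" if xy: "x \<in> \<Union>C" "y \<in> \<Union>C" for x y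
        proof -
          obtain Z W where "Z \<in> C" "W \<in> C" "x \<in> Z" "y \<in> W" using xy by auto
          note zw = this
          show ?thesis
          proof (cases "Z \<subseteq> W")
            case True
            then have "x \<oplus> y \<in> W" using zw additive_subgroup.a_closed[OF as[of W]] by blast
            then show ?thesis using zw by blast
          next
            case False
            then have "W \<subseteq> Z" using ch[of Z W] zw by blast
            then have "x \<oplus> y \<in> Z" using zw additive_subgroup.a_closed[OF as[of Z]] by blast
            then show ?thesis using zw by blast
          qed
        qed
      qed
      show "x \<otimes> r \<in> \<Union>C" if "x \<in> \<Union>C" "r \<in> carrier R" for x r
        using that ri unfolding right_ideal_def by (meson UnionE UnionI)
    qed
    moreover have "\<one> \<notin> \<Union>C" using sub A_def by auto
    moreover have "I \<subseteq> \<Union>C" using sub C(1) A_def by auto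
    ultimately show "\<Union>C \<in> A" using A_def by auto
  qed
  then obtain M where M: "M \<in> A" "\<And>Z. Z \<in> A \<Longrightarrow> M \<subseteq> Z \<Longrightarrow> Z = M" by blast
  have "maximal_right_ideal M R"
    unfolding maximal_right_ideal_def
  proof (intro conjI allI impI)
    show "right_ideal M R" using M A_def by auto
    show "M \<noteq> carrier R" using M A_def by auto
    fix J assume J: "right_ideal J R" "M \<subseteq> J"
    show "J = M \<or> J = carrier R"
    proof (cases "\<one> \<in> J")
      case True then show ?thesis using J right_ideal_one by blast
    next
      case False
      then have "J \<in> A" using J M(1) unfolding A_def by blast
      then show ?thesis using M(2) J(2) by blast
    qed
  qed
  then show ?thesis using M A_def by auto
qed

end

locale lring = ring R for R (structure) +
  fixes M
  assumes Mmax: "maximal_right_ideal M R"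
    and Muniq: "\<And>N. maximal_right_ideal N R \<Longrightarrow> N = M"
begin

lemma M_ri: "right_ideal M R" using Mmax unfolding maximal_right_ideal_def by auto

lemma M_as: "additive_subgroup M R" using M_ri unfolding right_ideal_def by auto

lemma M_sub: "M \<subseteq> carrier R" using additive_subgroup.a_subset[OF M_as] .

lemma M_zero: "\<zero> \<in> M" using additive_subgroup.zero_closed[OF M_as] .

lemma M_add: "x \<in> M \<Longrightarrow> y \<in> M \<Longrightarrow> x \<oplus> y \<in> M"
  using additive_subgroup.a_closed[OF M_as] by blast

lemma M_neg: "x \<in> M \<Longrightarrow> \<ominus> x \<in> M"
  using additive_subgroup.a_inv_closed[OF M_as] by blast

lemma M_r: "x \<in> M \<Longrightarrow> r \<in> carrier R \<Longrightarrow> x \<otimes> r \<in> M"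
  using M_ri unfolding right_ideal_def by blast

lemma one_notin: "\<one> \<notin> M"
  using Mmax right_ideal_one[OF M_ri] unfolding maximal_right_ideal_def by blast

lemma M_minus: "x \<in> M \<Longrightarrow> y \<in> M \<Longrightarrow> x \<ominus> y \<in> M"
  by (simp add: M_add M_neg a_minus_def)

lemma M_in: "x \<in> M \<Longrightarrow> x \<in> carrier R" using M_sub by blast

lemma proper_sub: "right_ideal I R \<Longrightarrow> \<one> \<notin> I \<Longrightarrow> I \<subseteq> M"
  using exists_max Muniq by blast

lemma rinv:
  assumes x: "x \<in> carrier R" "x \<notin> M"
  shows "\<exists>y\<in>carrier R. x \<otimes> y = \<one>"
proof (rule ccontr)
  assume no: "\<not> ?thesis"
  define I where "I = {x \<otimes> r | r. r \<in> carrier R}"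
  have "right_ideal I R"
    unfolding right_ideal_def
  proof (intro conjI ballI)
    show "additive_subgroup I R"
    proof (rule addsubI)
      show "I \<subseteq> carrier R" using x unfolding I_def by auto
      show "\<zero> \<in> I" unfolding I_def using x by (auto intro!: exI[of _ \<zero>])
      show "a \<oplus> b \<in> I" if ab: "a \<in> I" "b \<in> I" for a b
      proof -
        obtain r1 r2 where "r1 \<in> carrier R" "r2 \<in> carrier R" "a = x \<otimes> r1" "b = x \<otimes> r2"
          using ab unfolding I_def by auto
        then show ?thesis unfolding I_def using x by (auto simp: r_distr intro!: exI[of _ "r1 \<oplus> r2"])
      qed
      show "\<ominus> a \<in> I" if a: "a \<in> I" for a
      proof -
        obtain r1 where "r1 \<in> carrier R" "a = x \<otimes> r1"
          using a unfolding I_def by auto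
        then show ?thesis unfolding I_def using x by (auto simp: r_minus intro!: exI[of _ "\<ominus> r1"])
      qed
    qed
    show "a \<otimes> r \<in> I" if "a \<in> I" "r \<in> carrier R" for a r
    proof -
      obtain r1 where "r1 \<in> carrier R" "a = x \<otimes> r1"
        using \<open>a \<in> I\<close> unfolding I_def by auto
      then show ?thesis unfolding I_def using x that by (auto simp: m_assoc intro!: exI[of _ "r1 \<otimes> r"])
    qed
  qed
  moreover have "\<one> \<notin> I" using no unfolding I_def by auto
  ultimately have "I \<subseteq> M" by (rule proper_sub)
  moreover have "x \<in> I" unfolding I_def using x by (auto intro!: exI[of _ \<one>])
  ultimately show False using x by blast
qed

lemma unit_of_notin:
  assumes x: "x \<in> carrier R" "x \<notin> M"
  shows "x \<in> Units R"
proof -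
  obtain y where y: "y \<in> carrier R" "x \<otimes> y = \<one>" using rinv[OF x] by blast
  have "y \<otimes> x = \<one>"
  proof (cases "y \<in> M")
    case False
    then obtain z where z: "z \<in> carrier R" "y \<otimes> z = \<one>" using rinv[OF y(1)] by blast
    have "x = x \<otimes> (y \<otimes> z)" using x z by simp
    also have "\<dots> = (x \<otimes> y) \<otimes> z" using x(1) y(1) z(1) by (simp add: m_assoc)
    also have "\<dots> = z" using y z by simp
    finally show ?thesis using z by simp
  next
    case True
    have yx: "y \<otimes> x \<in> M" using M_r[OF True x(1)] .
    have "\<one> \<ominus> y \<otimes> x \<notin> M"
    proof
      assume "\<one> \<ominus> y \<otimes> x \<in> M"
      then have "(\<one> \<ominus> y \<otimes> x) \<oplus> y \<otimes> x \<in> M" using yx M_add by blast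
      moreover have "(\<one> \<ominus> y \<otimes> x) \<oplus> y \<otimes> x = \<one>" using x y by algebra
      ultimately show False using one_notin by simp
    qed
    then obtain w where w: "w \<in> carrier R" "(\<one> \<ominus> y \<otimes> x) \<otimes> w = \<one>"
      using rinv[of "\<one> \<ominus> y \<otimes> x"] x y by auto
    have "x = x \<otimes> ((\<one> \<ominus> y \<otimes> x) \<otimes> w)" using x w by simp
    also have "\<dots> = (x \<ominus> (x \<otimes> y) \<otimes> x) \<otimes> w" using x(1) y(1) w(1) by algebra
    also have "\<dots> = \<zero>"
    proof -
      have "x \<ominus> (x \<otimes> y) \<otimes> x = \<zero>" using x(1) by (simp add: y(2) a_minus_def r_neg)
      then show ?thesis using w(1) by simp
    qed
    finally have "x = \<zero>" .
    then have "x \<in> M" using M_zero by simp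
    then show ?thesis using x by simp
  qed
  then show ?thesis using x y unfolding Units_def by auto
qed

lemma notin_of_unit: "x \<in> Units R \<Longrightarrow> x \<notin> M"
proof
  assume "x \<in> Units R" "x \<in> M"
  then have "x \<otimes> inv x \<in> M" using M_r[OF _ Units_inv_closed] by blast
  then show False using \<open>x \<in> Units R\<close> one_notin by simp
qed

lemma units_eq: "x \<in> Units R \<longleftrightarrow> x \<in> carrier R \<and> x \<notin> M"
  using unit_of_notin notin_of_unit Units_closed by blast

lemma inv_cancel: "u \<in> Units R \<Longrightarrow> x \<in> carrier R \<Longrightarrow> inv u \<otimes> (u \<otimes> x) = x"
  by (metis Units_closed Units_inv_closed Units_l_inv l_one m_assoc)

lemma one_minus_notin:
  assumes "e \<in> M" shows "\<one> \<ominus> e \<notin> M"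
proof
  assume "\<one> \<ominus> e \<in> M"
  then have "(\<one> \<ominus> e) \<oplus> e \<in> M" using assms M_add by blast
  moreover have "(\<one> \<ominus> e) \<oplus> e = \<one>" using M_in[OF assms] by algebra
  ultimately show False using one_notin by simp
qed

lemma M_l:
  assumes x: "x \<in> M" and a: "a \<in> carrier R"
  shows "a \<otimes> x \<in> M"
proof (rule ccontr)
  assume "a \<otimes> x \<notin> M"
  have xc: "x \<in> carrier R" using M_in[OF x] .
  then have u: "a \<otimes> x \<in> Units R" using unit_of_notin \<open>a \<otimes> x \<notin> M\<close> a by blast
  define b where "b = inv (a \<otimes> x) \<otimes> a"
  have bc: "b \<in> carrier R" unfolding b_def using u a by simp
  have bx: "b \<otimes> x = \<one>" unfolding b_def using u a xc by (simp add: m_assoc)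
  define e where "e = x \<otimes> b"
  have eM: "e \<in> M" unfolding e_def using M_r[OF x bc] .
  then have "\<one> \<ominus> e \<in> Units R" using one_minus_notin[OF eM] M_in[OF eM] units_eq by simp
  moreover have "(\<one> \<ominus> e) \<otimes> x = \<zero>"
  proof -
    have "(\<one> \<ominus> e) \<otimes> x = x \<ominus> x \<otimes> (b \<otimes> x)" unfolding e_def using xc bc by algebra
    also have "\<dots> = \<zero>" using xc by (simp add: bx a_minus_def r_neg)
    finally show ?thesis .
  qed
  ultimately have "x = \<zero>"
  proof -
    assume u: "\<one> \<ominus> e \<in> Units R" and z: "(\<one> \<ominus> e) \<otimes> x = \<zero>"
    have "x = inv (\<one> \<ominus> e) \<otimes> ((\<one> \<ominus> e) \<otimes> x)" using u xc by (simp add: inv_cancel)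
    also have "\<dots> = \<zero>" using u z by simp
    finally show ?thesis .
  qed
  then show False using bx bc one_notin M_zero by (metis r_null)
qed

lemma M_ideal: "ideal M R"
proof (rule idealI)
  show "ring R" by (rule ring_axioms)
  show "subgroup M (add_monoid R)" using M_as unfolding additive_subgroup_def .
  show "\<And>a x. a \<in> M \<Longrightarrow> x \<in> carrier R \<Longrightarrow> x \<otimes> a \<in> M" using M_l by blast
  show "\<And>a x. a \<in> M \<Longrightarrow> x \<in> carrier R \<Longrightarrow> a \<otimes> x \<in> M" using M_r by blast
qed

lemma jac: "jacobson R = M"
  unfolding jacobson_def using Mmax Muniq M_sub by blast

lemma idem:
  assumes "e \<in> carrier R" "e \<otimes> e = e" shows "e = \<zero> \<or> e = \<one>"
proof (cases "e \<in> M")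
  case False
  then have u: "e \<in> Units R" using assms units_eq by blast
  have "e = inv e \<otimes> (e \<otimes> e)" using u assms(1) by (simp add: inv_cancel)
  also have "\<dots> = \<one>" using u assms by simp
  finally show ?thesis by simp
next
  case True
  then have u: "\<one> \<ominus> e \<in> Units R" using one_minus_notin assms units_eq by simp
  have "(\<one> \<ominus> e) \<otimes> e = e \<ominus> e \<otimes> e" using assms(1) by algebra
  also have "\<dots> = \<zero>" using assms by (simp add: a_minus_def r_neg)
  finally have z: "(\<one> \<ominus> e) \<otimes> e = \<zero>" .
  have "e = inv (\<one> \<ominus> e) \<otimes> ((\<one> \<ominus> e) \<otimes> e)" using u assms(1) by (simp add: inv_cancel)
  also have "\<dots> = \<zero>" using u z by simp
  finally show ?thesis by simp
qed

lemma is_idem_iff: "is_idem R e \<longleftrightarrow> e = \<zero> \<or> e = \<one>"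
  unfolding is_idem_def using idem by auto

definition "D \<longleftrightarrow> (\<forall>x\<in>carrier R. x \<in> M \<or> x \<ominus> \<one> \<in> M)"

lemma not_both: "a \<in> M \<Longrightarrow> a \<ominus> \<one> \<in> M \<Longrightarrow> False"
proof -
  assume a: "a \<in> M" "a \<ominus> \<one> \<in> M"
  have "a \<ominus> (a \<ominus> \<one>) \<in> M" using M_minus a by blast
  moreover have "a \<ominus> (a \<ominus> \<one>) = \<one>" using M_in[OF a(1)] by algebra
  ultimately show False using one_notin by simp
qed

lemma sJc_iff: "strongly_J_clean R \<longleftrightarrow> D"
proof
  assume H: "strongly_J_clean R"
  show D unfolding D_def
  proof
    fix a assume a: "a \<in> carrier R"
    then obtain e u where eu: "is_idem R e" "u \<in> M" "a = e \<oplus> u"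
      using H jac unfolding strongly_J_clean_def by blast
    have uc: "u \<in> carrier R" using M_in[OF eu(2)] .
    from eu(1) have "e = \<zero> \<or> e = \<one>" by (simp add: is_idem_iff)
    then show "a \<in> M \<or> a \<ominus> \<one> \<in> M"
    proof
      assume "e = \<zero>" then show ?thesis using eu uc by simp
    next
      assume "e = \<one>"
      then have "a \<ominus> \<one> = u" using eu(3) uc by simp algebra
      then show ?thesis using eu by simp
    qed
  qed
next
  assume H: D
  show "strongly_J_clean R" unfolding strongly_J_clean_def
  proof
    fix a assume a: "a \<in> carrier R"
    show "\<exists>e u. is_idem R e \<and> u \<in> jacobson R \<and> a = e \<oplus> u \<and> a \<otimes> e = e \<otimes> a"
    proof (cases "a \<in> M")
      case True
      then show ?thesis using a jac by (intro exI[of _ \<zero>] exI[of _ a]) (simp add: is_idem_iff)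
    next
      case False
      then have "a \<ominus> \<one> \<in> M" using H a unfolding D_def by blast
      moreover have "a = \<one> \<oplus> (a \<ominus> \<one>)" using a by algebra
      ultimately show ?thesis using a jac by (intro exI[of _ \<one>] exI[of _ "a \<ominus> \<one>"]) (simp add: is_idem_iff)
    qed
  qed
qed

lemma clean_pair:
  assumes a: "a \<in> carrier R"
  shows "(is_idem R (fst p) \<and> snd p \<in> Units R \<and> a = fst p \<oplus> snd p) \<longleftrightarrow>
     (p = (\<zero>, a) \<and> a \<notin> M) \<or> (p = (\<one>, a \<ominus> \<one>) \<and> a \<ominus> \<one> \<notin> M)"
proof (cases p)
  case (Pair e v)
  show ?thesis
  proof
    assume H: "is_idem R (fst p) \<and> snd p \<in> Units R \<and> a = fst p \<oplus> snd p"
    then have e: "e = \<zero> \<or> e = \<one>" and v: "v \<in> carrier R" "v \<notin> M" and av: "a = e \<oplus> v"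
      using Pair is_idem_iff units_eq by auto
    from e show "(p = (\<zero>, a) \<and> a \<notin> M) \<or> (p = (\<one>, a \<ominus> \<one>) \<and> a \<ominus> \<one> \<notin> M)"
    proof
      assume "e = \<zero>" then show ?thesis using Pair v av by simp
    next
      assume e1: "e = \<one>"
      have "(\<one> \<oplus> v) \<ominus> \<one> = v" using v(1) by algebra
      then have "a \<ominus> \<one> = v" using av e1 by simp
      then show ?thesis using Pair v e1 by simp
    qed
  next
    assume "(p = (\<zero>, a) \<and> a \<notin> M) \<or> (p = (\<one>, a \<ominus> \<one>) \<and> a \<ominus> \<one> \<notin> M)"
    then show "is_idem R (fst p) \<and> snd p \<in> Units R \<and> a = fst p \<oplus> snd p"
    proof
      assume "p = (\<zero>, a) \<and> a \<notin> M" then show ?thesis using a units_eq is_idem_iff by simp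
    next
      assume H: "p = (\<one>, a \<ominus> \<one>) \<and> a \<ominus> \<one> \<notin> M"
      have "a = \<one> \<oplus> (a \<ominus> \<one>)" using a by algebra
      then show ?thesis using H a units_eq is_idem_iff by simp
    qed
  qed
qed

lemma uc_iff: "uniquely_clean R \<longleftrightarrow> D"
proof
  assume H: "uniquely_clean R"
  show D unfolding D_def
  proof (intro ballI, rule ccontr)
    fix a assume a: "a \<in> carrier R" and n: "\<not> (a \<in> M \<or> a \<ominus> \<one> \<in> M)"
    have "\<exists>!p. is_idem R (fst p) \<and> snd p \<in> Units R \<and> a = fst p \<oplus> snd p"
      using H a unfolding uniquely_clean_def by blast
    then have "\<exists>!p. (p = (\<zero>, a) \<and> a \<notin> M) \<or> (p = (\<one>, a \<ominus> \<one>) \<and> a \<ominus> \<one> \<notin> M)"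
      using clean_pair[OF a] by simp
    then have "(\<zero>, a) = (\<one>, a \<ominus> \<one>)" using n by (metis (no_types, lifting))
    then show False using one_notin M_zero by auto
  qed
next
  assume H: D
  show "uniquely_clean R" unfolding uniquely_clean_def
  proof
    fix a assume a: "a \<in> carrier R"
    have "\<exists>!p. (p = (\<zero>, a) \<and> a \<notin> M) \<or> (p = (\<one>, a \<ominus> \<one>) \<and> a \<ominus> \<one> \<notin> M)"
    proof (cases "a \<in> M")
      case True
      then have "a \<ominus> \<one> \<notin> M" using not_both by blast
      then show ?thesis using True by auto
    next
      case False
      then have "a \<ominus> \<one> \<in> M" using H a unfolding D_def by blast
      then show ?thesis using False by auto
    qed
    then show "\<exists>!p. is_idem R (fst p) \<and> snd p \<in> Units R \<and> a = fst p \<oplus> snd p"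
      using clean_pair[OF a] by simp
  qed
qed

lemma two_units_iff: "(\<not> (\<exists>u\<in>Units R. \<exists>v\<in>Units R. \<one> = u \<oplus> v)) \<longleftrightarrow> D"
proof
  assume H: "\<not> (\<exists>u\<in>Units R. \<exists>v\<in>Units R. \<one> = u \<oplus> v)"
  show D unfolding D_def
  proof (intro ballI, rule ccontr)
    fix a assume a: "a \<in> carrier R" and n: "\<not> (a \<in> M \<or> a \<ominus> \<one> \<in> M)"
    have v: "\<ominus> (a \<ominus> \<one>) \<notin> M"
    proof
      assume "\<ominus> (a \<ominus> \<one>) \<in> M"
      then have "\<ominus> (\<ominus> (a \<ominus> \<one>)) \<in> M" by (rule M_neg)
      then show False using n a by simp
    qed
    have "\<one> = a \<oplus> \<ominus> (a \<ominus> \<one>)" using a by algebra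
    moreover have "a \<in> Units R" "\<ominus> (a \<ominus> \<one>) \<in> Units R" using a n v units_eq by auto
    ultimately show False using H by blast
  qed
next
  assume H: D
  show "\<not> (\<exists>u\<in>Units R. \<exists>v\<in>Units R. \<one> = u \<oplus> v)"
  proof
    assume "\<exists>u\<in>Units R. \<exists>v\<in>Units R. \<one> = u \<oplus> v"
    then obtain u v where uv: "u \<in> Units R" "v \<in> Units R" "\<one> = u \<oplus> v" by blast
    then have uc: "u \<in> carrier R" "u \<notin> M" "v \<in> carrier R" "v \<notin> M" using units_eq by auto
    then have "u \<ominus> \<one> \<in> M" using H unfolding D_def by blast
    then have "\<ominus> (u \<ominus> \<one>) \<in> M" by (rule M_neg)
    moreover have "\<ominus> (u \<ominus> (u \<oplus> v)) = v" using uc by algebra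
    ultimately show False using uv(3) uc by simp
  qed
qed

lemma proj_iff:
  assumes "star_ring R s"
  shows "is_projection R s e \<longleftrightarrow> is_idem R e"
proof -
  have sc: "\<And>a. a \<in> carrier R \<Longrightarrow> s a \<in> carrier R"
    and sa: "\<And>a b. a \<in> carrier R \<Longrightarrow> b \<in> carrier R \<Longrightarrow> s (a \<oplus> b) = s a \<oplus> s b"
    and sm: "\<And>a b. a \<in> carrier R \<Longrightarrow> b \<in> carrier R \<Longrightarrow> s (a \<otimes> b) = s b \<otimes> s a"
    and ss: "\<And>a. a \<in> carrier R \<Longrightarrow> s (s a) = a"
    using assms unfolding star_ring_def by auto
  have s0: "s \<zero> = \<zero>"
  proof -
    have x: "s \<zero> \<in> carrier R" using sc by simp
    have xx: "s \<zero> \<oplus> s \<zero> = s \<zero>" using sa[of \<zero> \<zero>] by simp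
    have "s \<zero> = (s \<zero> \<oplus> s \<zero>) \<ominus> s \<zero>" using x by algebra
    also have "\<dots> = \<zero>" using xx x by (simp add: a_minus_def r_neg)
    finally show ?thesis .
  qed
  have s1: "s \<one> = \<one>"
  proof -
    have x: "s \<one> \<in> carrier R" using sc by simp
    have "s \<one> = s \<one> \<otimes> \<one>" using x by simp
    also have "\<dots> = s \<one> \<otimes> s (s \<one>)" using ss by simp
    also have "\<dots> = s (s \<one> \<otimes> \<one>)" using sm[of "s \<one>" \<one>] x by simp
    also have "\<dots> = \<one>" using x ss by simp
    finally show ?thesis .
  qed
  show ?thesis unfolding is_projection_def is_idem_iff[symmetric]
    using is_idem_iff s0 s1 unfolding is_idem_def by auto
qed

lemma sJsc_iff: "star_ring R s \<Longrightarrow> strongly_J_star_clean R s \<longleftrightarrow> strongly_J_clean R"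
  unfolding strongly_J_star_clean_def strongly_J_clean_def using proj_iff by simp

end


lemma I2_ideal: "ideal (Idl\<^bsub>\<Z>\<^esub> {2::int}) \<Z>"
  by (rule int.genideal_ideal) simp

lemma pi_hom: "(\<lambda>n. ZMod 2 n) \<in> ring_hom \<Z> (ZFact 2)"
  using ideal.rcos_ring_hom[OF I2_ideal] unfolding ZFact_def ZMod_def .

lemma Z2_ring: "ring (ZFact 2)" using ZFact_is_cring cring.axioms(1) by blast

lemma Z2_zero: "\<zero>\<^bsub>ZFact 2\<^esub> = ZMod 2 0"
  using ring_hom_zero[OF pi_hom int.ring_axioms Z2_ring] by simp

lemma Z2_one: "\<one>\<^bsub>ZFact 2\<^esub> = ZMod 2 1"
  using ring_hom_one[OF pi_hom] by simp

lemma Z2_ne: "\<zero>\<^bsub>ZFact 2\<^esub> \<noteq> \<one>\<^bsub>ZFact 2\<^esub>"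
  unfolding Z2_zero Z2_one
proof
  assume "ZMod 2 0 = ZMod 2 1"
  then have "(0::int) mod 2 = 1 mod 2" by (rule ZMod_imp_zmod)
  then show False by simp
qed

lemma Z2_carrier: "carrier (ZFact 2) = {\<zero>\<^bsub>ZFact 2\<^esub>, \<one>\<^bsub>ZFact 2\<^esub>}"
proof
  show "carrier (ZFact 2) \<subseteq> {\<zero>\<^bsub>ZFact 2\<^esub>, \<one>\<^bsub>ZFact 2\<^esub>}"
  proof
    fix Y assume "Y \<in> carrier (ZFact 2)"
    then obtain n where "Y = ZMod 2 n"
      unfolding ZFact_def FactRing_def A_RCOSETS_def RCOSETS_def ZMod_def a_r_coset_def by auto
    then have "Y = ZMod 2 (n mod 2)" using ZMod_mod by simp
    moreover have "n mod 2 = 0 \<or> n mod 2 = 1" by auto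
    ultimately show "Y \<in> {\<zero>\<^bsub>ZFact 2\<^esub>, \<one>\<^bsub>ZFact 2\<^esub>}" unfolding Z2_zero Z2_one by auto
  qed
  show "{\<zero>\<^bsub>ZFact 2\<^esub>, \<one>\<^bsub>ZFact 2\<^esub>} \<subseteq> carrier (ZFact 2)"
    using ring.ring_simprules(2,6)[OF Z2_ring] by auto
qed

lemma Z2_oneone: "\<one>\<^bsub>ZFact 2\<^esub> \<oplus>\<^bsub>ZFact 2\<^esub> \<one>\<^bsub>ZFact 2\<^esub> = \<zero>\<^bsub>ZFact 2\<^esub>"
proof -
  have "\<one>\<^bsub>ZFact 2\<^esub> \<oplus>\<^bsub>ZFact 2\<^esub> \<one>\<^bsub>ZFact 2\<^esub> = ZMod 2 (1 + 1)"
    unfolding Z2_one using ring_hom_add[OF pi_hom, of 1 1] by simp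
  also have "\<dots> = ZMod 2 ((1 + 1) mod 2)" using ZMod_mod by blast
  finally show ?thesis unfolding Z2_zero by simp
qed

context lring begin

lemma two_in: "D \<Longrightarrow> \<one> \<oplus> \<one> \<in> M"
proof -
  assume H: D
  have n: "\<ominus> \<one> \<notin> M"
  proof
    assume "\<ominus> \<one> \<in> M" then have "\<ominus> (\<ominus> \<one>) \<in> M" by (rule M_neg)
    then show False using one_notin by simp
  qed
  moreover have "\<ominus> \<one> \<in> carrier R" by simp
  ultimately have "\<ominus> \<one> \<ominus> \<one> \<in> M" using H unfolding D_def by blast
  then have "\<ominus> (\<ominus> \<one> \<ominus> \<one>) \<in> M" by (rule M_neg)
  moreover have "\<ominus> (\<ominus> \<one> \<ominus> \<one>) = \<one> \<oplus> \<one>" by algebra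
  ultimately show ?thesis by simp
qed

lemma add_nn: "D \<Longrightarrow> a \<in> carrier R \<Longrightarrow> b \<in> carrier R \<Longrightarrow> a \<notin> M \<Longrightarrow> b \<notin> M \<Longrightarrow> a \<oplus> b \<in> M"
proof -
  assume H: D and a: "a \<in> carrier R" "a \<notin> M" and b: "b \<in> carrier R" "b \<notin> M"
  have "a \<ominus> \<one> \<in> M" "b \<ominus> \<one> \<in> M" using H a b unfolding D_def by auto
  then have "(a \<ominus> \<one>) \<oplus> (b \<ominus> \<one>) \<oplus> (\<one> \<oplus> \<one>) \<in> M" using two_in[OF H] M_add by blast
  moreover have "(a \<ominus> \<one>) \<oplus> (b \<ominus> \<one>) \<oplus> (\<one> \<oplus> \<one>) = a \<oplus> b" using a(1) b(1) by algebra
  ultimately show ?thesis by simp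
qed

lemma add_mn: "a \<in> M \<Longrightarrow> b \<in> carrier R \<Longrightarrow> b \<notin> M \<Longrightarrow> a \<oplus> b \<notin> M"
proof
  assume a: "a \<in> M" and b: "b \<in> carrier R" "b \<notin> M" and ab: "a \<oplus> b \<in> M"
  have "(a \<oplus> b) \<ominus> a \<in> M" using M_minus[OF ab a] .
  moreover have "(a \<oplus> b) \<ominus> a = b" using M_in[OF a] b(1) by algebra
  ultimately show False using b by simp
qed

lemma mult_M: "a \<in> carrier R \<Longrightarrow> b \<in> carrier R \<Longrightarrow> a \<otimes> b \<in> M \<longleftrightarrow> a \<in> M \<or> b \<in> M"
proof -
  assume a: "a \<in> carrier R" and b: "b \<in> carrier R"
  show ?thesis
  proof
    assume "a \<otimes> b \<in> M"
    then show "a \<in> M \<or> b \<in> M" using a b units_eq Units_m_closed by blast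
  next
    assume "a \<in> M \<or> b \<in> M"
    then show "a \<otimes> b \<in> M" using M_r M_l a b by blast
  qed
qed

definition f where "f a = (if a \<in> M then \<zero>\<^bsub>ZFact 2\<^esub> else \<one>\<^bsub>ZFact 2\<^esub>)"

lemma f_hom: "D \<Longrightarrow> f \<in> ring_hom R (ZFact 2)"
proof (rule ring_hom_memI)
  assume H: D
  interpret Z: ring "ZFact 2" by (rule Z2_ring)
  show "f x \<in> carrier (ZFact 2)" if "x \<in> carrier R" for x unfolding f_def by simp
  show "f (x \<otimes> y) = f x \<otimes>\<^bsub>ZFact 2\<^esub> f y" if "x \<in> carrier R" "y \<in> carrier R" for x y
    unfolding f_def using mult_M[OF that] by auto
  show "f (x \<oplus> y) = f x \<oplus>\<^bsub>ZFact 2\<^esub> f y" if xy: "x \<in> carrier R" "y \<in> carrier R" for x y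
  proof (cases "x \<in> M"; cases "y \<in> M")
    assume "x \<in> M" "y \<in> M" then show ?thesis unfolding f_def using M_add by auto
  next
    assume "x \<in> M" "y \<notin> M" then show ?thesis unfolding f_def using add_mn xy by auto
  next
    assume "x \<notin> M" "y \<in> M"
    then have "y \<oplus> x \<notin> M" using add_mn xy by blast
    then show ?thesis unfolding f_def using \<open>x \<notin> M\<close> \<open>y \<in> M\<close> xy by (simp add: a_comm)
  next
    assume "x \<notin> M" "y \<notin> M" then show ?thesis unfolding f_def using add_nn[OF H] xy Z2_oneone by auto
  qed
  show "f \<one> = \<one>\<^bsub>ZFact 2\<^esub>" unfolding f_def using one_notin by simp
qed

lemma quot_of_D: "D \<Longrightarrow> R Quot M \<simeq> ZFact 2"
proof -
  assume H: D
  have hr: "ring_hom_ring R (ZFact 2) f"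
    by (rule ring_hom_ringI2[OF ring_axioms Z2_ring f_hom[OF H]])
  have surj: "f ` carrier R = carrier (ZFact 2)"
  proof -
    have f0: "f \<zero> = \<zero>\<^bsub>ZFact 2\<^esub>" unfolding f_def using M_zero by simp
    have f1: "f \<one> = \<one>\<^bsub>ZFact 2\<^esub>" unfolding f_def using one_notin by simp
    have a: "\<zero>\<^bsub>ZFact 2\<^esub> \<in> f ` carrier R" unfolding f0[symmetric] by (rule imageI) simp
    have b: "\<one>\<^bsub>ZFact 2\<^esub> \<in> f ` carrier R" unfolding f1[symmetric] by (rule imageI) simp
    have c: "f ` carrier R \<subseteq> {\<zero>\<^bsub>ZFact 2\<^esub>, \<one>\<^bsub>ZFact 2\<^esub>}" unfolding f_def by (rule image_subsetI) simp
    show ?thesis unfolding Z2_carrier using a b c by blast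
  qed
  have ker: "a_kernel R (ZFact 2) f = M"
  proof -
    have "\<And>x. (if x \<in> M then \<zero>\<^bsub>ZFact 2\<^esub> else \<one>\<^bsub>ZFact 2\<^esub>) = \<zero>\<^bsub>ZFact 2\<^esub> \<longleftrightarrow> x \<in> M"
      using Z2_ne by simp
    then show ?thesis unfolding a_kernel_def' f_def using M_sub by blast
  qed
  show ?thesis using ring_hom_ring.FactRing_iso[OF hr surj] unfolding ker .
qed

lemma D_of_quot: "R Quot M \<simeq> ZFact 2 \<Longrightarrow> D"
proof -
  assume "R Quot M \<simeq> ZFact 2"
  then obtain \<phi> where phi: "\<phi> \<in> ring_iso (R Quot M) (ZFact 2)" unfolding is_ring_iso_def by blast
  interpret I: ideal M R by (rule M_ideal)
  interpret Z: ring "ZFact 2" by (rule Z2_ring)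
  have Qr: "ring (R Quot M)" by (rule I.quotient_is_ring)
  have ph: "\<phi> \<in> ring_hom (R Quot M) (ZFact 2)" and bij: "bij_betw \<phi> (carrier (R Quot M)) (carrier (ZFact 2))"
    using phi unfolding ring_iso_def by auto
  define g where "g = (\<lambda>x. \<phi> (M +> x))"
  have gh: "g \<in> ring_hom R (ZFact 2)"
    unfolding g_def using ring_hom_trans[OF I.rcos_ring_hom ph] by (simp add: comp_def)
  have gz: "x \<in> M" if x: "x \<in> carrier R" "g x = \<zero>\<^bsub>ZFact 2\<^esub>" for x
  proof -
    have "\<phi> \<zero>\<^bsub>R Quot M\<^esub> = \<zero>\<^bsub>ZFact 2\<^esub>" by (rule ring_hom_zero[OF ph Qr Z2_ring])
    moreover have "\<zero>\<^bsub>R Quot M\<^esub> = M" unfolding FactRing_def by simp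
    ultimately have "\<phi> (M +> x) = \<phi> M" using x unfolding g_def by simp
    moreover have "M +> x \<in> carrier (R Quot M)" using ring_hom_closed[OF I.rcos_ring_hom x(1)] .
    moreover have "M \<in> carrier (R Quot M)" using ring_hom_closed[OF I.rcos_ring_hom zero_closed] a_rcos_zero[OF M_ideal M_zero]
      by simp
    ultimately have "M +> x = M" using bij unfolding bij_betw_def inj_on_def by blast
    then show ?thesis using I.rcos_const_imp_mem x(1) by blast
  qed
  show D unfolding D_def
  proof
    fix x assume x: "x \<in> carrier R"
    have "g x \<in> {\<zero>\<^bsub>ZFact 2\<^esub>, \<one>\<^bsub>ZFact 2\<^esub>}" using ring_hom_closed[OF gh x] Z2_carrier by simp
    then show "x \<in> M \<or> x \<ominus> \<one> \<in> M"
    proof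
      assume "g x = \<zero>\<^bsub>ZFact 2\<^esub>" then show ?thesis using gz x by blast
    next
      assume g1: "g x \<in> {\<one>\<^bsub>ZFact 2\<^esub>}"
      have xm: "x \<ominus> \<one> \<in> carrier R" using x by simp
      have "g ((x \<ominus> \<one>) \<oplus> \<one>) = g (x \<ominus> \<one>) \<oplus>\<^bsub>ZFact 2\<^esub> g \<one>" using ring_hom_add[OF gh xm one_closed] .
      moreover have "(x \<ominus> \<one>) \<oplus> \<one> = x" using x by algebra
      ultimately have eq: "\<one>\<^bsub>ZFact 2\<^esub> = g (x \<ominus> \<one>) \<oplus>\<^bsub>ZFact 2\<^esub> \<one>\<^bsub>ZFact 2\<^esub>"
        using g1 ring_hom_one[OF gh] by simp
      have "g (x \<ominus> \<one>) \<in> {\<zero>\<^bsub>ZFact 2\<^esub>, \<one>\<^bsub>ZFact 2\<^esub>}" using ring_hom_closed[OF gh xm] Z2_carrier by simp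
      then have "g (x \<ominus> \<one>) = \<zero>\<^bsub>ZFact 2\<^esub>" using eq Z2_oneone Z2_ne by auto
      then show ?thesis using gz xm by blast
    qed
  qed
qed

end


theorem corollary2p8:
  fixes R :: "('a, 'b) ring_scheme" and s :: "'a \<Rightarrow> 'a"
  assumes "star_ring R s" and "local_ring R"
  shows "(strongly_J_star_clean R s \<longleftrightarrow> strongly_J_clean R) \<and>
         (strongly_J_clean R \<longleftrightarrow> uniquely_clean R) \<and>
         (uniquely_clean R \<longleftrightarrow> R Quot (jacobson R) \<simeq> ZFact 2) \<and>
         (R Quot (jacobson R) \<simeq> ZFact 2 \<longleftrightarrow>
            \<not> (\<exists>u\<in>Units R. \<exists>v\<in>Units R. \<one>\<^bsub>R\<^esub> = u \<oplus>\<^bsub>R\<^esub> v))"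
proof -
  have r: "ring R" using assms(2) unfolding local_ring_def by blast
  obtain M where M: "maximal_right_ideal M R" "\<And>N. maximal_right_ideal N R \<Longrightarrow> N = M"
    using assms(2) unfolding local_ring_def by blast
  interpret L: lring R M by (rule lring.intro[OF r]) (unfold_locales; use M in blast)
  have q: "R Quot (jacobson R) \<simeq> ZFact 2 \<longleftrightarrow> L.D"
    unfolding L.jac using L.quot_of_D L.D_of_quot by blast
  show ?thesis using L.sJsc_iff[OF assms(1)] L.sJc_iff L.uc_iff L.two_units_iff q by blast
qed

end
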